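(* Let $(G;+)$ be a commutative groupoid and let $M, M'$ be multisets of cardinality $3$ over $G$. Then the deck of $M$ equals the deck of $M'$ if and only if one of the following holds: (i) $M = M'$; (ii) $M = \langle r,s,t\rangle$ and $M' = \langle r, r+s, r+t\rangle$ for some $r,s,t \in G$ with $r + (r+s) = s$, $r + (r+t) = t$ and $(r+s)+(r+t) = s+t$; (iii) $M = \langle r,s,t\rangle$ and $M' = \langle r+s, r+t, s+t\rangle$ for some $r,s,t \in G$ with $(r+s)+(r+t) = r$, $(r+s)+(s+t) = s$ and $(r+t)+(s+t) = t$.
   Context: A (finite) multiset $M$ over a set $X$ is a function $\mathbf{1}_M \colon X \to \mathbb{N}$ with finite support; $|M| = \sum_x \mathbf{1}_M(x)$ is its cardinality. $\langle x_1,\dots,x_k\rangle$ denotes the multiset in which each element occurs as often as it appears in the list. A commutative groupoid is a set $G$ with a commutative binary operation $+$ (not necessarily associative). For a 3-multiset $M=\langle a,b,c\rangle$ over $G$ its cards are $\langle a, b+c\rangle$, $\langle b, a+c\rangle$, $\langle c, a+b\rangle$, and its deck is the multiset of these three cards. (In general, for $M = \langle m_1,\dots,m_n\rangle$, the card $M_{\{i,j\}}$ replaces $m_i, m_j$ by the single element $m_i+m_j$, and the deck is the multiset of all $\binom n2$ cards.) *)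

theory Defs
  imports Main "HOL-Library.Multiset"
begin

definition comm_groupoid :: "('a \<Rightarrow> 'a \<Rightarrow> 'a) \<Rightarrow> bool" where
  "comm_groupoid f \<longleftrightarrow> (\<forall>x y. f x y = f y x)"

definition card_of_list :: "('a \<Rightarrow> 'a \<Rightarrow> 'a) \<Rightarrow> 'a list \<Rightarrow> nat \<Rightarrow> nat \<Rightarrow> 'a multiset" where
  "card_of_list f xs i j =
     add_mset (f (xs ! i) (xs ! j)) (mset (map (\<lambda>k. xs ! k) (filter (\<lambda>k. k \<noteq> i \<and> k \<noteq> j) [0..<length xs])))"

definition deck_of_list :: "('a \<Rightarrow> 'a \<Rightarrow> 'a) \<Rightarrow> 'a list \<Rightarrow> 'a multiset multiset" where
  "deck_of_list f xs =
     mset (map (\<lambda>(i, j). card_of_list f xs i j)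
       (filter (\<lambda>(i, j). i < j) (List.product [0..<length xs] [0..<length xs])))"

definition deck :: "('a \<Rightarrow> 'a \<Rightarrow> 'a) \<Rightarrow> 'a multiset \<Rightarrow> 'a multiset multiset" where
  "deck f M = deck_of_list f (SOME xs. mset xs = M)"

end

theory Submission imports Defs
begin

lemma dl3: "deck_of_list f [x,y,z] = {#{#f x y, z#}, {#f x z, y#}, {#f y z, x#}#}"
  by (simp add: deck_of_list_def card_of_list_def upt_rec)
lemma pair2: "{#x,y#} = {#a,b#} \<longleftrightarrow> (x=a\<and>y=b) \<or> (x=b\<and>y=a)"
  by (auto simp: add_eq_conv_diff split: if_splits)
lemma perm3: "{#x,y,z#} = {#a,b,c#} \<Longrightarrow> (x=a\<and>y=b\<and>z=c) \<or> (x=a\<and>y=c\<and>z=b) \<or> (x=b\<and>y=a\<and>z=c) \<or> (x=b\<and>y=c\<and>z=a) \<or> (x=c\<and>y=a\<and>z=b) \<or> (x=c\<and>y=b\<and>z=a)"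
  by (auto simp: add_eq_conv_diff split: if_splits)

lemma deck3:
  assumes c: "comm_groupoid f"
  shows "deck f {#a,b,c#} = {#{#a, f b c#}, {#b, f a c#}, {#c, f a b#}#}"
proof -
  have cm: "\<And>x y. f x y = f y x" using c by (simp add: comm_groupoid_def)
  obtain xs where xs: "mset xs = {#a,b,c#}" by (metis ex_mset)
  define ys where "ys = (SOME xs. mset xs = {#a,b,c#})"
  have ys: "mset ys = {#a,b,c#}" unfolding ys_def using xs by (rule someI)
  then have "length ys = 3" by (metis size_mset size_add_mset size_empty numeral_3_eq_3 One_nat_def)
  then obtain x y z where yz: "ys = [x,y,z]"
    by (metis (no_types, lifting) length_0_conv length_Suc_conv numeral_3_eq_3)
  have "{#x,y,z#} = {#a,b,c#}" using ys yz by (simp add: add_mset_commute)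
  then have p: "(x=a\<and>y=b\<and>z=c) \<or> (x=a\<and>y=c\<and>z=b) \<or> (x=b\<and>y=a\<and>z=c) \<or> (x=b\<and>y=c\<and>z=a) \<or> (x=c\<and>y=a\<and>z=b) \<or> (x=c\<and>y=b\<and>z=a)"
    by (rule perm3)
  have "deck f {#a,b,c#} = {#{#f x y, z#}, {#f x z, y#}, {#f y z, x#}#}"
    unfolding deck_def ys_def[symmetric] yz dl3 ..
  also have "\<dots> = {#{#a, f b c#}, {#b, f a c#}, {#c, f a b#}#}"
    using p by (elim disjE) (auto simp: cm add_mset_commute)
  finally show ?thesis .
qed

definition RHS :: "('a \<Rightarrow> 'a \<Rightarrow> 'a) \<Rightarrow> 'a multiset \<Rightarrow> 'a multiset \<Rightarrow> bool" where
  "RHS f M M' \<longleftrightarrow> (M = M'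
      \<or> (\<exists>r s t. M = {#r, s, t#} \<and> M' = {#r, f r s, f r t#}
            \<and> f r (f r s) = s \<and> f r (f r t) = t
            \<and> f (f r s) (f r t) = f s t)
      \<or> (\<exists>r s t. M = {#r, s, t#} \<and> M' = {#f r s, f r t, f s t#}
            \<and> f (f r s) (f r t) = r \<and> f (f r s) (f s t) = s
            \<and> f (f r t) (f s t) = t))"

lemma aligned:
  assumes c: "comm_groupoid f"
    and A: "{#a, f b c#} = {#a', f b' c'#}"
    and B: "{#b, f a c#} = {#b', f a' c'#}"
    and C: "{#c, f a b#} = {#c', f a' b'#}"
  shows "RHS f {#a,b,c#} {#a',b',c'#}"
proof -
  have cm: "\<And>x y. f x y = f y x" using c by (simp add: comm_groupoid_def)
  from A B C show ?thesis unfolding pair2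
  proof (elim disjE conjE)
    assume "a = a'" "f b c = f b' c'" "b = b'" "f a c = f a' c'" "c = c'" "f a b = f a' b'"
    then show ?thesis unfolding RHS_def by simp
  next
    assume h: "a = a'" "f b c = f b' c'" "b = b'" "f a c = f a' c'" "c = f a' b'" "f a b = c'"
    then show ?thesis unfolding RHS_def by simp
  next
    assume h: "a = a'" "f b c = f b' c'" "b = f a' c'" "f a c = b'" "c = c'" "f a b = f a' b'"
    then show ?thesis unfolding RHS_def by simp
  next
    assume h: "a = a'" "f b c = f b' c'" "b = f a' c'" "f a c = b'" "c = f a' b'" "f a b = c'"
    then show ?thesis unfolding RHS_def
      by (intro disjI2 disjI1 exI[of _ a] exI[of _ b] exI[of _ c]) (auto simp: cm)
  next
    assume h: "a = f b' c'" "f b c = a'" "b = b'" "f a c = f a' c'" "c = c'" "f a b = f a' b'"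
    then show ?thesis unfolding RHS_def by simp
  next
    assume h: "a = f b' c'" "f b c = a'" "b = b'" "f a c = f a' c'" "c = f a' b'" "f a b = c'"
    then show ?thesis unfolding RHS_def
      by (intro disjI2 disjI1 exI[of _ b] exI[of _ a] exI[of _ c]) (auto simp: cm add_mset_commute)
  next
    assume h: "a = f b' c'" "f b c = a'" "b = f a' c'" "f a c = b'" "c = c'" "f a b = f a' b'"
    then show ?thesis unfolding RHS_def
      by (intro disjI2 disjI1 exI[of _ c] exI[of _ a] exI[of _ b]) (auto simp: cm add_mset_commute)
  next
    assume h: "a = f b' c'" "f b c = a'" "b = f a' c'" "f a c = b'" "c = f a' b'" "f a b = c'"
    then show ?thesis unfolding RHS_def
      by (intro disjI2 disjI2 exI[of _ a] exI[of _ b] exI[of _ c]) (auto simp: cm add_mset_commute)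
  qed
qed


lemma size3: "size M = 3 \<Longrightarrow> \<exists>a b c. M = {#a,b,c#}"
proof -
  assume "size M = 3"
  obtain xs where xs: "mset xs = M" by (metis ex_mset)
  then have "length xs = 3" using \<open>size M = 3\<close> by auto
  then obtain x y z where "xs = [x,y,z]"
    by (metis (no_types, lifting) length_0_conv length_Suc_conv numeral_3_eq_3)
  then show ?thesis using xs by (auto simp: add_mset_commute)
qed

lemma fwd:
  assumes c: "comm_groupoid f"
    and e: "{#{#a, f b c#}, {#b, f a c#}, {#c, f a b#}#} = {#{#a', f b' c'#}, {#b', f a' c'#}, {#c', f a' b'#}#}"
  shows "RHS f {#a,b,c#} {#a',b',c'#}"
proof -
  have cm: "\<And>x y. f x y = f y x" using c by (simp add: comm_groupoid_def)
  from perm3[OF e] show ?thesis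
  proof (elim disjE conjE)
    assume "{#a, f b c#} = {#a', f b' c'#}" "{#b, f a c#} = {#b', f a' c'#}" "{#c, f a b#} = {#c', f a' b'#}"
    then show ?thesis by (rule aligned[OF c])
  next
    assume "{#a, f b c#} = {#a', f b' c'#}" "{#b, f a c#} = {#c', f a' b'#}" "{#c, f a b#} = {#b', f a' c'#}"
    then have "RHS f {#a,b,c#} {#a',c',b'#}" by (intro aligned[OF c]) (simp_all add: cm)
    then show ?thesis by (simp add: add_mset_commute)
  next
    assume "{#a, f b c#} = {#b', f a' c'#}" "{#b, f a c#} = {#a', f b' c'#}" "{#c, f a b#} = {#c', f a' b'#}"
    then have "RHS f {#a,b,c#} {#b',a',c'#}" by (intro aligned[OF c]) (simp_all add: cm)
    then show ?thesis by (simp add: add_mset_commute)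
  next
    assume "{#a, f b c#} = {#b', f a' c'#}" "{#b, f a c#} = {#c', f a' b'#}" "{#c, f a b#} = {#a', f b' c'#}"
    then have "RHS f {#a,b,c#} {#b',c',a'#}" by (intro aligned[OF c]) (simp_all add: cm)
    then show ?thesis by (simp add: add_mset_commute)
  next
    assume "{#a, f b c#} = {#c', f a' b'#}" "{#b, f a c#} = {#a', f b' c'#}" "{#c, f a b#} = {#b', f a' c'#}"
    then have "RHS f {#a,b,c#} {#c',a',b'#}" by (intro aligned[OF c]) (simp_all add: cm)
    then show ?thesis by (simp add: add_mset_commute)
  next
    assume "{#a, f b c#} = {#c', f a' b'#}" "{#b, f a c#} = {#b', f a' c'#}" "{#c, f a b#} = {#a', f b' c'#}"
    then have "RHS f {#a,b,c#} {#c',b',a'#}" by (intro aligned[OF c]) (simp_all add: cm)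
    then show ?thesis by (simp add: add_mset_commute)
  qed
qed

lemma bwd:
  assumes c: "comm_groupoid f" and "size M = 3" and "size M' = 3" and r: "RHS f M M'"
  shows "deck f M = deck f M'"
proof -
  have cm: "\<And>x y. f x y = f y x" using c by (simp add: comm_groupoid_def)
  from r show ?thesis unfolding RHS_def
  proof (elim disjE exE conjE)
    fix r s t assume h: "M = {#r, s, t#}" "M' = {#r, f r s, f r t#}" "f r (f r s) = s" "f r (f r t) = t"
       "f (f r s) (f r t) = f s t"
    show ?thesis unfolding h(1,2) deck3[OF c] using h(3-5) by (simp add: cm add_mset_commute)
  next
    fix r s t assume h: "M = {#r, s, t#}" "M' = {#f r s, f r t, f s t#}" "f (f r s) (f r t) = r" "f (f r s) (f s t) = s"
       "f (f r t) (f s t) = t"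
    show ?thesis unfolding h(1,2) deck3[OF c] using h(3-5) by (simp add: cm add_mset_commute)
  qed simp
qed

theorem mainTheorem5:
  fixes add :: "'a \<Rightarrow> 'a \<Rightarrow> 'a" (infixl "\<oplus>" 65)
    and M M' :: "'a multiset"
  assumes "comm_groupoid (\<oplus>)"
    and "size M = 3" and "size M' = 3"
  shows "deck (\<oplus>) M = deck (\<oplus>) M' \<longleftrightarrow>
     (M = M'
      \<or> (\<exists>r s t. M = {#r, s, t#} \<and> M' = {#r, r \<oplus> s, r \<oplus> t#}
            \<and> r \<oplus> (r \<oplus> s) = s \<and> r \<oplus> (r \<oplus> t) = t
            \<and> (r \<oplus> s) \<oplus> (r \<oplus> t) = s \<oplus> t)
      \<or> (\<exists>r s t. M = {#r, s, t#} \<and> M' = {#r \<oplus> s, r \<oplus> t, s \<oplus> t#}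
            \<and> (r \<oplus> s) \<oplus> (r \<oplus> t) = r \<and> (r \<oplus> s) \<oplus> (s \<oplus> t) = s
            \<and> (r \<oplus> t) \<oplus> (s \<oplus> t) = t))"
proof -
  have "deck (\<oplus>) M = deck (\<oplus>) M' \<longleftrightarrow> RHS (\<oplus>) M M'"
  proof
    assume d: "deck (\<oplus>) M = deck (\<oplus>) M'"
    obtain a b c where M: "M = {#a,b,c#}" using size3[OF assms(2)] by blast
    obtain a' b' c' where M': "M' = {#a',b',c'#}" using size3[OF assms(3)] by blast
    show "RHS (\<oplus>) M M'" unfolding M M'
      by (rule fwd[OF assms(1)]) (use d in \<open>simp add: M M' deck3[OF assms(1)]\<close>)
  next
    assume "RHS (\<oplus>) M M'"
    then show "deck (\<oplus>) M = deck (\<oplus>) M'" using bwd assms by blast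
  qed
  then show ?thesis unfolding RHS_def .
qed

end
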